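(* Let $\mathrm{M}=\langle e_1+I,\ e_2+I\rangle$ and $\Lambda=\langle e_1+I,\ e_1/2+\sqrt3 e_2/2+I\rangle$, where $e_1,e_2$ are the standard basis vectors of $E^2$. Let $\mathrm{K}=\{(a+I)_\star : a\in E^2\}\subseteq \mathrm{Aff}(\mathrm{M})$ and let $$A=\begin{pmatrix}-1&0\\0&1\end{pmatrix},\ B=\begin{pmatrix}-1&1\\0&1\end{pmatrix},\ C=\begin{pmatrix}0&1\\1&0\end{pmatrix},\ D=\begin{pmatrix}1&-1/2\\0&\sqrt3/2\end{pmatrix}.$$ Then $\mathrm{Sym}(\mathrm{M})=\langle \mathrm{K}, A_\star, C_\star\rangle$, $D\mathrm{M}D^{-1}=\Lambda$, the map $D_\sharp:\mathrm{Aff}(\mathrm{M})\to\mathrm{Aff}(\Lambda)$ is an isomorphism, and $\mathrm{Sym}(\Lambda)=D_\sharp(\langle \mathrm{K}, B_\star, C_\star\rangle)$.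
   Context: Affine maps of $E^2$ are written $a+A$ (meaning $x\mapsto a+Ax$); $a+I$ is translation by $a$. For a 2-space group $\mathrm{M}$ (a discrete group of isometries of $E^2$ with compact quotient), let $N_A(\mathrm{M})$ be its normalizer in the affine group of $E^2$. Each $a+A\in N_A(\mathrm{M})$ induces an affinity $(a+A)_\star:\mathrm{M}x\mapsto\mathrm{M}(a+Ax)$ of the flat orbifold $E^2/\mathrm{M}$; $\mathrm{Aff}(\mathrm{M})$ is the group of all such affinities, and $\mathrm{Sym}(\mathrm{M})=\mathrm{Isom}(E^2/\mathrm{M})$ is its subgroup of isometries of the flat orbifold $E^2/\mathrm{M}$. For an affine map $\phi$ with $\phi\mathrm{M}\phi^{-1}=\Lambda$, $\phi_\sharp:\mathrm{Aff}(\mathrm{M})\to\mathrm{Aff}(\Lambda)$ is defined by $\phi_\sharp((a+A)_\star)=(\phi(a+A)\phi^{-1})_\star$. Here $E^2/\mathrm{M}$ is the square torus and $E^2/\Lambda$ the hexagonal torus. *)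

theory Defs
  imports "HOL-Analysis.Analysis" "HOL-Algebra.Generated_Groups"
begin

text \<open>Affine maps a + A of the Euclidean plane, represented as pairs (a, A).\<close>
type_synonym affmap = "(real^2) \<times> (real^2^2)"

definition aff_apply :: "affmap \<Rightarrow> real^2 \<Rightarrow> real^2" where
  "aff_apply \<phi> x = fst \<phi> + snd \<phi> *v x"

definition aff_comp :: "affmap \<Rightarrow> affmap \<Rightarrow> affmap" where
  "aff_comp \<phi> \<psi> = (fst \<phi> + snd \<phi> *v fst \<psi>, snd \<phi> ** snd \<psi>)"

definition aff_inv :: "affmap \<Rightarrow> affmap" where
  "aff_inv \<phi> = (- (matrix_inv (snd \<phi>) *v fst \<phi>), matrix_inv (snd \<phi>))"

text \<open>The affine group of the plane as a HOL-Algebra group structure.\<close>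
definition AffGroup :: "affmap monoid" where
  "AffGroup = \<lparr>carrier = {\<phi>. invertible (snd \<phi>)}, mult = aff_comp, one = (0, mat 1)\<rparr>"

definition transl :: "real^2 \<Rightarrow> affmap" where
  "transl a = (a, mat 1)"

definition linmap :: "real^2^2 \<Rightarrow> affmap" where
  "linmap A = (0, A)"

text \<open>Conjugate of a group of affine maps: phi G phi^-1.\<close>
definition conj_set :: "affmap \<Rightarrow> affmap set \<Rightarrow> affmap set" where
  "conj_set \<phi> G = (\<lambda>g. aff_comp (aff_comp \<phi> g) (aff_inv \<phi>)) ` G"

text \<open>Normalizer N_A(G) in the affine group.\<close>
definition aff_normalizer :: "affmap set \<Rightarrow> affmap set" where
  "aff_normalizer G = {\<phi> \<in> carrier AffGroup. conj_set \<phi> G = G}"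

definition orbit :: "affmap set \<Rightarrow> real^2 \<Rightarrow> (real^2) set" where
  "orbit G x = {aff_apply g x | g. g \<in> G}"

text \<open>The orbit space E^2/G.\<close>
definition orbspace :: "affmap set \<Rightarrow> (real^2) set set" where
  "orbspace G = range (orbit G)"

text \<open>The induced map (phi)_star : G x \<mapsto> G (phi x) on E^2/G.\<close>
definition induced :: "affmap set \<Rightarrow> affmap \<Rightarrow> (real^2) set \<Rightarrow> (real^2) set" where
  "induced G \<phi> = restrict (\<lambda>S. orbit G (aff_apply \<phi> (SOME x. x \<in> S))) (orbspace G)"

text \<open>Aff(G): all affinities of E^2/G induced by elements of N_A(G).\<close>
definition Aff :: "affmap set \<Rightarrow> ((real^2) set \<Rightarrow> (real^2) set) set" where
  "Aff G = induced G ` aff_normalizer G"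

text \<open>Aff(G) as a group under composition of maps of E^2/G.\<close>
definition AffOrb :: "affmap set \<Rightarrow> ((real^2) set \<Rightarrow> (real^2) set) monoid" where
  "AffOrb G = \<lparr>carrier = Aff G, mult = compose (orbspace G),
               one = restrict id (orbspace G)\<rparr>"

text \<open>Quotient (orbifold) metric on E^2/G.\<close>
definition orb_dist :: "(real^2) set \<Rightarrow> (real^2) set \<Rightarrow> real" where
  "orb_dist O1 O2 = Inf {dist x y | x y. x \<in> O1 \<and> y \<in> O2}"

text \<open>Sym(G) = Isom(E^2/G): the affinities that are isometries of E^2/G.\<close>
definition Sym :: "affmap set \<Rightarrow> ((real^2) set \<Rightarrow> (real^2) set) set" where
  "Sym G = {f \<in> Aff G. \<forall>O1 \<in> orbspace G. \<forall>O2 \<in> orbspace G.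
                orb_dist (f O1) (f O2) = orb_dist O1 O2}"

text \<open>phi_sharp : Aff(G) \<rightarrow> Aff(H), (a+A)_star \<mapsto> (phi (a+A) phi^-1)_star.\<close>
definition sharp :: "affmap \<Rightarrow> affmap set \<Rightarrow> affmap set
    \<Rightarrow> ((real^2) set \<Rightarrow> (real^2) set) \<Rightarrow> ((real^2) set \<Rightarrow> (real^2) set)" where
  "sharp \<phi> G H f = induced H (aff_comp (aff_comp \<phi> (SOME \<psi>. \<psi> \<in> aff_normalizer G \<and> induced G \<psi> = f))
                                 (aff_inv \<phi>))"

definition e1 :: "real^2" where "e1 = vector [1, 0]"
definition e2 :: "real^2" where "e2 = vector [0, 1]"

definition Mgrp :: "affmap set" where
  "Mgrp = generate AffGroup {transl e1, transl e2}"

definition Lgrp :: "affmap set" where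
  "Lgrp = generate AffGroup {transl e1, transl ((1/2) *\<^sub>R e1 + (sqrt 3 / 2) *\<^sub>R e2)}"

definition Amat :: "real^2^2" where "Amat = vector [vector [-1, 0], vector [0, 1]]"
definition Bmat :: "real^2^2" where "Bmat = vector [vector [-1, 1], vector [0, 1]]"
definition Cmat :: "real^2^2" where "Cmat = vector [vector [0, 1], vector [1, 0]]"
definition Dmat :: "real^2^2" where "Dmat = vector [vector [1, -1/2], vector [0, sqrt 3 / 2]]"

definition Kgrp :: "((real^2) set \<Rightarrow> (real^2) set) set" where
  "Kgrp = {induced Mgrp (transl a) | a. True}"

end

theory Submission
  imports Defs
begin

(* Part 1 *)

lemma minv_r: "invertible (A::real^2^2) \<Longrightarrow> A ** matrix_inv A = mat 1"
  unfolding matrix_inv_def invertible_def by (metis (mono_tags, lifting) someI_ex)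
lemma minv_l: "invertible (A::real^2^2) \<Longrightarrow> matrix_inv A ** A = mat 1"
  unfolding matrix_inv_def invertible_def by (metis (mono_tags, lifting) someI_ex)
lemma minv_unique: "(A::real^2^2) ** B = mat 1 \<Longrightarrow> B ** A = mat 1 \<Longrightarrow> matrix_inv A = B"
proof -
  assume h: "A ** B = mat 1" "B ** A = mat 1"
  hence inv: "invertible A" unfolding invertible_def by blast
  have "matrix_inv A = matrix_inv A ** (A ** B)" using h by simp
  also have "\<dots> = (matrix_inv A ** A) ** B" by (simp add: matrix_mul_assoc)
  also have "\<dots> = B" using minv_l[OF inv] by simp
  finally show ?thesis .
qed
lemma minv_inv: "invertible (A::real^2^2) \<Longrightarrow> invertible (matrix_inv A)"
  using minv_l minv_r invertible_def by blast
lemma minv_minv: "invertible (A::real^2^2) \<Longrightarrow> matrix_inv (matrix_inv A) = A"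
  using minv_l minv_r minv_unique by blast
lemma minv_id: "matrix_inv (mat 1 :: real^2^2) = mat 1"
  by (rule minv_unique) simp_all
lemma minv_apply_l: "invertible (A::real^2^2) \<Longrightarrow> matrix_inv A *v (A *v v) = v"
  by (simp add: matrix_vector_mul_assoc minv_l)
lemma minv_apply_r: "invertible (A::real^2^2) \<Longrightarrow> A *v (matrix_inv A *v v) = v"
  by (simp add: matrix_vector_mul_assoc minv_r)
lemma invertible_mult2: "invertible (A::real^2^2) \<Longrightarrow> invertible B \<Longrightarrow> invertible (A ** B)"
  by (rule invertible_mult)

lemma mvm_neg: "(A::real^2^2) *v (- x) = - (A *v x)"
  using matrix_vector_mult_diff_distrib[of A 0 x] by simp
lemma invertible_id: "invertible (mat 1 :: real^2^2)"
  unfolding invertible_def by (intro exI[of _ "mat 1"]) simp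

lemma aff_comp_assoc: "aff_comp (aff_comp f g) h = aff_comp f (aff_comp g h)"
  by (simp add: aff_comp_def matrix_vector_right_distrib matrix_vector_mul_assoc matrix_mul_assoc add.assoc)
lemma aff_apply_comp: "aff_apply (aff_comp f g) x = aff_apply f (aff_apply g x)"
  by (simp add: aff_comp_def aff_apply_def matrix_vector_right_distrib matrix_vector_mul_assoc add.assoc)
lemma aff_comp_one_l: "aff_comp (0, mat 1) f = f"
  by (simp add: aff_comp_def)
lemma aff_comp_one_r: "aff_comp f (0, mat 1) = f"
  by (simp add: aff_comp_def)
lemma aff_inv_l: "invertible (snd f) \<Longrightarrow> aff_comp (aff_inv f) f = (0, mat 1)"
  by (simp add: aff_comp_def aff_inv_def minv_l)
lemma aff_inv_r: "invertible (snd f) \<Longrightarrow> aff_comp f (aff_inv f) = (0, mat 1)"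
  by (simp add: aff_comp_def aff_inv_def minv_r matrix_vector_mul_assoc mvm_neg)

lemma aff_inv_snd: "snd (aff_inv f) = matrix_inv (snd f)" by (simp add: aff_inv_def)

lemma AffGroup_group: "group AffGroup"
proof (rule groupI)
  fix x y assume "x \<in> carrier AffGroup" "y \<in> carrier AffGroup"
  thus "x \<otimes>\<^bsub>AffGroup\<^esub> y \<in> carrier AffGroup"
    by (auto simp: AffGroup_def aff_comp_def invertible_mult)
next
  show "\<one>\<^bsub>AffGroup\<^esub> \<in> carrier AffGroup" by (simp add: AffGroup_def invertible_id)
next
  fix x y z show "x \<otimes>\<^bsub>AffGroup\<^esub> y \<otimes>\<^bsub>AffGroup\<^esub> z = x \<otimes>\<^bsub>AffGroup\<^esub> (y \<otimes>\<^bsub>AffGroup\<^esub> z)"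
    by (simp add: AffGroup_def aff_comp_assoc)
next
  fix x show "\<one>\<^bsub>AffGroup\<^esub> \<otimes>\<^bsub>AffGroup\<^esub> x = x" by (simp add: AffGroup_def aff_comp_one_l)
next
  fix x assume "x \<in> carrier AffGroup"
  hence inv: "invertible (snd x)" by (simp add: AffGroup_def)
  have "aff_inv x \<otimes>\<^bsub>AffGroup\<^esub> x = \<one>\<^bsub>AffGroup\<^esub>"
    using aff_inv_l[OF inv] by (simp add: AffGroup_def)
  moreover have "aff_inv x \<in> carrier AffGroup"
    using minv_inv[OF inv] by (simp add: AffGroup_def aff_inv_snd)
  ultimately show "\<exists>y\<in>carrier AffGroup. y \<otimes>\<^bsub>AffGroup\<^esub> x = \<one>\<^bsub>AffGroup\<^esub>" by (rule bexI)
qed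

lemma AffGroup_inv: "invertible (snd f) \<Longrightarrow> inv\<^bsub>AffGroup\<^esub> f = aff_inv f"
proof (rule group.inv_equality[OF AffGroup_group])
  assume inv: "invertible (snd f)"
  show "aff_inv f \<otimes>\<^bsub>AffGroup\<^esub> f = \<one>\<^bsub>AffGroup\<^esub>"
    using aff_inv_l[OF inv] by (simp add: AffGroup_def)
  show "aff_inv f \<in> carrier AffGroup"
    using minv_inv[OF inv] by (simp add: AffGroup_def aff_inv_snd)
  show "f \<in> carrier AffGroup" using inv by (simp add: AffGroup_def)
qed


(* Part 2 *)

definition TG :: "(real^2) set \<Rightarrow> affmap set" where "TG L = transl ` L"
definition lat :: "(real^2) set \<Rightarrow> bool" where
  "lat L \<longleftrightarrow> 0 \<in> L \<and> (\<forall>x\<in>L. \<forall>y\<in>L. x + y \<in> L) \<and> (\<forall>x\<in>L. -x \<in> L)"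
definition NL :: "(real^2) set \<Rightarrow> affmap set" where
  "NL L = {\<phi>. invertible (snd \<phi>) \<and> ((*v) (snd \<phi>)) ` L = L}"

lemma lat_0: "lat L \<Longrightarrow> 0 \<in> L" by (simp add: lat_def)
lemma lat_add: "lat L \<Longrightarrow> x \<in> L \<Longrightarrow> y \<in> L \<Longrightarrow> x + y \<in> L" by (simp add: lat_def)
lemma lat_neg: "lat L \<Longrightarrow> x \<in> L \<Longrightarrow> - x \<in> L" by (simp add: lat_def)
lemma lat_diff: "lat L \<Longrightarrow> x \<in> L \<Longrightarrow> y \<in> L \<Longrightarrow> x - y \<in> L"
  using lat_add[of L x "-y"] lat_neg[of L y] by simp

lemma orbit_TG: "orbit (TG L) x = (\<lambda>l. l + x) ` L"
  unfolding orbit_def TG_def transl_def aff_apply_def by (auto; force)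

lemma mem_orbit: "y \<in> orbit (TG L) x \<longleftrightarrow> y - x \<in> L"
  unfolding orbit_TG by (auto intro: image_eqI[of _ _ "y - x"])

lemma self_orbit: "lat L \<Longrightarrow> x \<in> orbit (TG L) x"
  by (simp add: mem_orbit lat_0)

lemma orbit_eq_iff: "lat L \<Longrightarrow> orbit (TG L) x = orbit (TG L) y \<longleftrightarrow> x - y \<in> L"
proof
  assume l: "lat L" and e: "orbit (TG L) x = orbit (TG L) y"
  have "x \<in> orbit (TG L) y" using self_orbit[OF l, of x] e by simp
  thus "x - y \<in> L" by (simp add: mem_orbit)
next
  assume l: "lat L" and d: "x - y \<in> L"
  have "\<forall>z. z - x \<in> L \<longleftrightarrow> z - y \<in> L"
  proof
    fix z
    have "z - y = (z - x) + (x - y)" "z - x = (z - y) - (x - y)" by simp_all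
    thus "z - x \<in> L \<longleftrightarrow> z - y \<in> L"
      using lat_add[OF l _ d] lat_diff[OF l _ d] by metis
  qed
  thus "orbit (TG L) x = orbit (TG L) y" unfolding set_eq_iff mem_orbit by blast
qed

lemma transl_inj: "inj transl" unfolding inj_def transl_def by simp

lemma conj_transl: "invertible (snd \<phi>) \<Longrightarrow>
   aff_comp (aff_comp \<phi> (transl l)) (aff_inv \<phi>) = transl (snd \<phi> *v l)"
  by (cases \<phi>) (simp add: aff_comp_def aff_inv_def transl_def mvm_neg minv_apply_r minv_r
      matrix_vector_right_distrib)

lemma conj_TG: "invertible (snd \<phi>) \<Longrightarrow> conj_set \<phi> (TG L) = TG (((*v) (snd \<phi>)) ` L)"
  unfolding conj_set_def TG_def image_image by (simp add: conj_transl)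

lemma TG_eq_iff: "TG L = TG L' \<longleftrightarrow> L = L'"
  unfolding TG_def using transl_inj by (simp add: inj_image_eq_iff)

lemma normalizer_TG: "aff_normalizer (TG L) = NL L"
proof -
  have "\<phi> \<in> aff_normalizer (TG L) \<longleftrightarrow> \<phi> \<in> NL L" for \<phi>
  proof (cases "invertible (snd \<phi>)")
    case True thus ?thesis unfolding aff_normalizer_def NL_def AffGroup_def
      by (simp add: conj_TG[OF True] TG_eq_iff)
  next
    case False thus ?thesis unfolding aff_normalizer_def NL_def AffGroup_def by simp
  qed
  thus ?thesis by blast
qed

lemma NL_diff: "\<phi> \<in> NL L \<Longrightarrow> x - y \<in> L \<Longrightarrow> aff_apply \<phi> x - aff_apply \<phi> y \<in> L"
proof -
  assume p: "\<phi> \<in> NL L" and d: "x - y \<in> L"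
  have "aff_apply \<phi> x - aff_apply \<phi> y = snd \<phi> *v (x - y)"
    by (simp add: aff_apply_def matrix_vector_mult_diff_distrib)
  also have "\<dots> \<in> ((*v) (snd \<phi>)) ` L" using d by blast
  finally show ?thesis using p by (simp add: NL_def)
qed

lemma orbit_in_space: "orbit G x \<in> orbspace G" by (simp add: orbspace_def)

lemma induced_orbit: "lat L \<Longrightarrow> \<phi> \<in> NL L \<Longrightarrow>
    induced (TG L) \<phi> (orbit (TG L) x) = orbit (TG L) (aff_apply \<phi> x)"
proof -
  assume l: "lat L" and p: "\<phi> \<in> NL L"
  define y where "y = (SOME y. y \<in> orbit (TG L) x)"
  have "y \<in> orbit (TG L) x" unfolding y_def using self_orbit[OF l] by (rule someI)
  hence "y - x \<in> L" by (simp add: mem_orbit)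
  hence "aff_apply \<phi> y - aff_apply \<phi> x \<in> L" using NL_diff[OF p] by blast
  hence "orbit (TG L) (aff_apply \<phi> y) = orbit (TG L) (aff_apply \<phi> x)"
    using orbit_eq_iff[OF l] by blast
  thus ?thesis unfolding induced_def using orbit_in_space y_def by simp
qed

lemma orbspace_cases: "S \<in> orbspace G \<Longrightarrow> (\<And>x. S = orbit G x \<Longrightarrow> P) \<Longrightarrow> P"
  unfolding orbspace_def by blast

lemma induced_out: "S \<notin> orbspace G \<Longrightarrow> induced G \<phi> S = undefined"
  unfolding induced_def by simp

lemma induced_eq_iff: "lat L \<Longrightarrow> \<phi> \<in> NL L \<Longrightarrow> \<psi> \<in> NL L \<Longrightarrow>
   induced (TG L) \<phi> = induced (TG L) \<psi> \<longleftrightarrow> (\<forall>x. aff_apply \<phi> x - aff_apply \<psi> x \<in> L)"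
proof
  assume l: "lat L" and p: "\<phi> \<in> NL L" and q: "\<psi> \<in> NL L"
  assume e: "induced (TG L) \<phi> = induced (TG L) \<psi>"
  show "\<forall>x. aff_apply \<phi> x - aff_apply \<psi> x \<in> L"
  proof
    fix x
    have "orbit (TG L) (aff_apply \<phi> x) = orbit (TG L) (aff_apply \<psi> x)"
      using e induced_orbit[OF l p, of x] induced_orbit[OF l q, of x] by simp
    thus "aff_apply \<phi> x - aff_apply \<psi> x \<in> L" using orbit_eq_iff[OF l] by blast
  qed
next
  assume l: "lat L" and p: "\<phi> \<in> NL L" and q: "\<psi> \<in> NL L"
  assume h: "\<forall>x. aff_apply \<phi> x - aff_apply \<psi> x \<in> L"
  show "induced (TG L) \<phi> = induced (TG L) \<psi>"
  proof
    fix S show "induced (TG L) \<phi> S = induced (TG L) \<psi> S"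
    proof (cases "S \<in> orbspace (TG L)")
      case True
      then obtain x where S: "S = orbit (TG L) x" by (rule orbspace_cases)
      show ?thesis unfolding S induced_orbit[OF l p] induced_orbit[OF l q]
        using h orbit_eq_iff[OF l] by blast
    next
      case False thus ?thesis by (simp add: induced_out)
    qed
  qed
qed

lemma NL_comp: "\<phi> \<in> NL L \<Longrightarrow> \<psi> \<in> NL L \<Longrightarrow> aff_comp \<phi> \<psi> \<in> NL L"
  unfolding NL_def aff_comp_def
  by (auto simp: invertible_mult image_image matrix_vector_mul_assoc[symmetric])
     (metis image_image matrix_vector_mul_assoc)

lemma NL_inv: "\<phi> \<in> NL L \<Longrightarrow> aff_inv \<phi> \<in> NL L"
proof -
  assume p: "\<phi> \<in> NL L"
  hence i: "invertible (snd \<phi>)" and e: "((*v) (snd \<phi>)) ` L = L" by (auto simp: NL_def)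
  have "((*v) (matrix_inv (snd \<phi>))) ` L = ((*v) (matrix_inv (snd \<phi>))) ` ((*v) (snd \<phi>)) ` L"
    using e by simp
  also have "\<dots> = L" unfolding image_image minv_apply_l[OF i] by simp
  finally show ?thesis using minv_inv[OF i] by (simp add: NL_def aff_inv_snd)
qed

lemma NL_one: "(0, mat 1) \<in> NL L" by (simp add: NL_def invertible_id)
lemma NL_transl: "transl a \<in> NL L" by (simp add: NL_def transl_def invertible_id)
lemma NL_linmap: "invertible X \<Longrightarrow> ((*v) X) ` L = L \<Longrightarrow> linmap X \<in> NL L"
  by (simp add: NL_def linmap_def)

lemma induced_comp: "lat L \<Longrightarrow> \<phi> \<in> NL L \<Longrightarrow> \<psi> \<in> NL L \<Longrightarrow>
  compose (orbspace (TG L)) (induced (TG L) \<phi>) (induced (TG L) \<psi>) = induced (TG L) (aff_comp \<phi> \<psi>)"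
proof
  fix S assume l: "lat L" and p: "\<phi> \<in> NL L" and q: "\<psi> \<in> NL L"
  show "compose (orbspace (TG L)) (induced (TG L) \<phi>) (induced (TG L) \<psi>) S = induced (TG L) (aff_comp \<phi> \<psi>) S"
  proof (cases "S \<in> orbspace (TG L)")
    case True
    then obtain x where S: "S = orbit (TG L) x" by (rule orbspace_cases)
    show ?thesis using True unfolding compose_eq[OF True] unfolding S
      induced_orbit[OF l q] induced_orbit[OF l p] induced_orbit[OF l NL_comp[OF p q]]
      by (simp add: aff_apply_comp)
  next
    case False thus ?thesis by (simp add: induced_out compose_def)
  qed
qed

lemma AffOrb_carrier: "carrier (AffOrb (TG L)) = induced (TG L) ` NL L"
  by (simp add: AffOrb_def Aff_def normalizer_TG)

lemma AffOrb_mult: "lat L \<Longrightarrow> \<phi> \<in> NL L \<Longrightarrow> \<psi> \<in> NL L \<Longrightarrow>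
  induced (TG L) \<phi> \<otimes>\<^bsub>AffOrb (TG L)\<^esub> induced (TG L) \<psi> = induced (TG L) (aff_comp \<phi> \<psi>)"
  by (simp add: AffOrb_def induced_comp)

lemma AffOrb_one: "lat L \<Longrightarrow> \<one>\<^bsub>AffOrb (TG L)\<^esub> = induced (TG L) (0, mat 1)"
proof -
  assume l: "lat L"
  have "restrict id (orbspace (TG L)) = induced (TG L) (0, mat 1)"
  proof
    fix S show "restrict id (orbspace (TG L)) S = induced (TG L) (0, mat 1) S"
    proof (cases "S \<in> orbspace (TG L)")
      case True
      then obtain x where S: "S = orbit (TG L) x" by (rule orbspace_cases)
      show ?thesis using True unfolding S induced_orbit[OF l NL_one] by (simp add: aff_apply_def)
    next
      case False thus ?thesis by (simp add: induced_out)
    qed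
  qed
  thus ?thesis by (simp add: AffOrb_def)
qed

lemma group_AffOrb: "lat L \<Longrightarrow> group (AffOrb (TG L))"
proof (rule groupI)
  assume l: "lat L"
  fix x y assume "x \<in> carrier (AffOrb (TG L))" "y \<in> carrier (AffOrb (TG L))"
  then obtain p q where "p \<in> NL L" "q \<in> NL L" "x = induced (TG L) p" "y = induced (TG L) q"
    unfolding AffOrb_carrier by blast
  thus "x \<otimes>\<^bsub>AffOrb (TG L)\<^esub> y \<in> carrier (AffOrb (TG L))"
    unfolding AffOrb_carrier using AffOrb_mult[OF l] NL_comp by auto
next
  assume l: "lat L"
  show "\<one>\<^bsub>AffOrb (TG L)\<^esub> \<in> carrier (AffOrb (TG L))"
    unfolding AffOrb_carrier AffOrb_one[OF l] using NL_one by blast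
next
  assume l: "lat L"
  fix x y z assume "x \<in> carrier (AffOrb (TG L))" "y \<in> carrier (AffOrb (TG L))" "z \<in> carrier (AffOrb (TG L))"
  then obtain p q r where pqr: "p \<in> NL L" "q \<in> NL L" "r \<in> NL L" "x = induced (TG L) p"
     "y = induced (TG L) q" "z = induced (TG L) r"
    unfolding AffOrb_carrier by blast
  thus "x \<otimes>\<^bsub>AffOrb (TG L)\<^esub> y \<otimes>\<^bsub>AffOrb (TG L)\<^esub> z = x \<otimes>\<^bsub>AffOrb (TG L)\<^esub> (y \<otimes>\<^bsub>AffOrb (TG L)\<^esub> z)"
    by (simp add: AffOrb_mult[OF l] NL_comp aff_comp_assoc)
next
  assume l: "lat L"
  fix x assume "x \<in> carrier (AffOrb (TG L))"
  then obtain p where "p \<in> NL L" "x = induced (TG L) p" unfolding AffOrb_carrier by blast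
  thus "\<one>\<^bsub>AffOrb (TG L)\<^esub> \<otimes>\<^bsub>AffOrb (TG L)\<^esub> x = x"
    by (simp add: AffOrb_one[OF l] AffOrb_mult[OF l] NL_one aff_comp_one_l)
next
  assume l: "lat L"
  fix x assume "x \<in> carrier (AffOrb (TG L))"
  then obtain p where p: "p \<in> NL L" "x = induced (TG L) p" unfolding AffOrb_carrier by blast
  have i: "invertible (snd p)" using p by (simp add: NL_def)
  have "induced (TG L) (aff_inv p) \<otimes>\<^bsub>AffOrb (TG L)\<^esub> x = \<one>\<^bsub>AffOrb (TG L)\<^esub>"
    using p by (simp add: AffOrb_one[OF l] AffOrb_mult[OF l] NL_inv aff_inv_l[OF i])
  moreover have "induced (TG L) (aff_inv p) \<in> carrier (AffOrb (TG L))"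
    unfolding AffOrb_carrier using NL_inv[OF p(1)] by blast
  ultimately show "\<exists>y\<in>carrier (AffOrb (TG L)). y \<otimes>\<^bsub>AffOrb (TG L)\<^esub> x = \<one>\<^bsub>AffOrb (TG L)\<^esub>"
    by (rule bexI)
qed

lemma AffOrb_inv: "lat L \<Longrightarrow> \<phi> \<in> NL L \<Longrightarrow>
  inv\<^bsub>AffOrb (TG L)\<^esub> (induced (TG L) \<phi>) = induced (TG L) (aff_inv \<phi>)"
proof (rule group.inv_equality[OF group_AffOrb])
  assume l: "lat L" and p: "\<phi> \<in> NL L"
  have i: "invertible (snd \<phi>)" using p by (simp add: NL_def)
  show "induced (TG L) (aff_inv \<phi>) \<otimes>\<^bsub>AffOrb (TG L)\<^esub> induced (TG L) \<phi> = \<one>\<^bsub>AffOrb (TG L)\<^esub>"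
    using p by (simp add: AffOrb_one[OF l] AffOrb_mult[OF l] NL_inv aff_inv_l[OF i])
  show "induced (TG L) \<phi> \<in> carrier (AffOrb (TG L))" unfolding AffOrb_carrier using p by blast
  show "induced (TG L) (aff_inv \<phi>) \<in> carrier (AffOrb (TG L))"
    unfolding AffOrb_carrier using NL_inv[OF p] by blast
qed


(* Part 3 *)

definition dL :: "(real^2) set \<Rightarrow> real^2 \<Rightarrow> real" where
  "dL L v = Inf ((\<lambda>l. norm (v + l)) ` L)"
definition normpres :: "real^2^2 \<Rightarrow> bool" where
  "normpres X \<longleftrightarrow> (\<forall>v. norm (X *v v) = norm v)"
definition minnorm :: "(real^2) set \<Rightarrow> bool" where
  "minnorm L \<longleftrightarrow> (\<forall>l\<in>L. l \<noteq> 0 \<longrightarrow> 1 \<le> norm l)"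

lemma orb_dist_TG: "lat L \<Longrightarrow> orb_dist (orbit (TG L) x) (orbit (TG L) y) = dL L (x - y)"
proof -
  assume l: "lat L"
  have "{dist x' y' | x' y'. x' \<in> orbit (TG L) x \<and> y' \<in> orbit (TG L) y} = (\<lambda>l. norm (x - y + l)) ` L"
  proof (intro equalityI subsetI)
    fix d assume "d \<in> {dist x' y' | x' y'. x' \<in> orbit (TG L) x \<and> y' \<in> orbit (TG L) y}"
    then obtain x' y' where d: "d = dist x' y'" "x' - x \<in> L" "y' - y \<in> L"
      unfolding mem_orbit by blast
    have "d = norm (x - y + ((x' - x) - (y' - y)))" unfolding d dist_norm by (simp add: algebra_simps)
    moreover have "(x' - x) - (y' - y) \<in> L" using lat_diff[OF l d(2,3)] .
    ultimately show "d \<in> (\<lambda>l. norm (x - y + l)) ` L" by blast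
  next
    fix d assume "d \<in> (\<lambda>l. norm (x - y + l)) ` L"
    then obtain k where k: "k \<in> L" "d = norm (x - y + k)" by blast
    have "k + x \<in> orbit (TG L) x" using k by (simp add: mem_orbit)
    moreover have "y \<in> orbit (TG L) y" using self_orbit[OF l] .
    moreover have "d = dist (k + x) y" using k by (simp add: dist_norm algebra_simps)
    ultimately show "d \<in> {dist x' y' | x' y'. x' \<in> orbit (TG L) x \<and> y' \<in> orbit (TG L) y}" by blast
  qed
  thus ?thesis unfolding orb_dist_def dL_def by simp
qed

lemma Sym_TG_iff: "lat L \<Longrightarrow> f \<in> Sym (TG L) \<longleftrightarrow>
   (\<exists>\<phi>\<in>NL L. f = induced (TG L) \<phi> \<and> (\<forall>v. dL L (snd \<phi> *v v) = dL L v))"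
proof -
  assume l: "lat L"
  have key: "(\<forall>O1\<in>orbspace (TG L). \<forall>O2\<in>orbspace (TG L).
      orb_dist (induced (TG L) \<phi> O1) (induced (TG L) \<phi> O2) = orb_dist O1 O2)
      \<longleftrightarrow> (\<forall>v. dL L (snd \<phi> *v v) = dL L v)" if p: "\<phi> \<in> NL L" for \<phi>
  proof -
    have "orb_dist (induced (TG L) \<phi> (orbit (TG L) x)) (induced (TG L) \<phi> (orbit (TG L) y))
       = dL L (snd \<phi> *v (x - y))" for x y
      unfolding induced_orbit[OF l p] orb_dist_TG[OF l]
      by (simp add: aff_apply_def matrix_vector_mult_diff_distrib)
    moreover have "orb_dist (orbit (TG L) x) (orbit (TG L) y) = dL L (x - y)" for x y
      using orb_dist_TG[OF l] .
    ultimately have "(\<forall>O1\<in>orbspace (TG L). \<forall>O2\<in>orbspace (TG L).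
      orb_dist (induced (TG L) \<phi> O1) (induced (TG L) \<phi> O2) = orb_dist O1 O2)
      \<longleftrightarrow> (\<forall>x y. dL L (snd \<phi> *v (x - y)) = dL L (x - y))"
      unfolding orbspace_def by auto
    also have "\<dots> \<longleftrightarrow> (\<forall>v. dL L (snd \<phi> *v v) = dL L v)"
      by (metis diff_zero)
    finally show ?thesis .
  qed
  show ?thesis
    unfolding Sym_def Aff_def normalizer_TG using key by blast
qed

lemma dL_normpres: "\<phi> \<in> NL L \<Longrightarrow> normpres (snd \<phi>) \<Longrightarrow> dL L (snd \<phi> *v v) = dL L v"
proof -
  assume p: "\<phi> \<in> NL L" and n: "normpres (snd \<phi>)"
  let ?A = "snd \<phi>"
  have e: "((*v) ?A) ` L = L" using p by (simp add: NL_def)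
  have "(\<lambda>l. norm (?A *v v + l)) ` L = (\<lambda>l. norm (?A *v v + l)) ` (((*v) ?A) ` L)"
    using e by simp
  also have "\<dots> = (\<lambda>l. norm (?A *v (v + l))) ` L"
    by (simp add: image_image matrix_vector_right_distrib)
  also have "\<dots> = (\<lambda>l. norm (v + l)) ` L" using n by (simp add: normpres_def)
  finally show ?thesis by (simp add: dL_def)
qed

lemma dL_small: "lat L \<Longrightarrow> minnorm L \<Longrightarrow> norm v \<le> 1/2 \<Longrightarrow> dL L v = norm v"
  unfolding dL_def
proof (rule cInf_eq_minimum)
  assume l: "lat L" and m: "minnorm L" and v: "norm v \<le> 1/2"
  show "norm v \<in> (\<lambda>l. norm (v + l)) ` L" using lat_0[OF l] by force
  fix d assume "d \<in> (\<lambda>l. norm (v + l)) ` L"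
  then obtain k where k: "k \<in> L" "d = norm (v + k)" by blast
  show "norm v \<le> d"
  proof (cases "k = 0")
    case True thus ?thesis using k by simp
  next
    case False
    hence "1 \<le> norm k" using m k by (simp add: minnorm_def)
    moreover have "norm k - norm v \<le> norm (v + k)" using norm_diff_ineq[of k v] by (simp add: add.commute)
    ultimately show ?thesis using v k by simp
  qed
qed

lemma dL_pres_normpres: "lat L \<Longrightarrow> minnorm L \<Longrightarrow> \<forall>v. dL L (X *v v) = dL L v \<Longrightarrow> normpres X"
  unfolding normpres_def
proof
  fix w assume l: "lat L" and m: "minnorm L" and h: "\<forall>v. dL L (X *v v) = dL L v"
  define t where "t = 1 / (2 * (norm w + norm (X *v w) + 1))"
  have D1: "0 < norm w + norm (X *v w) + 1" "0 < 2 * norm w + 2 * norm (X *v w) + 2"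
    using norm_ge_zero[of w] norm_ge_zero[of "X *v w"] by linarith+
  have tpos: "t > 0" unfolding t_def using D1 by simp
  have t1: "t * norm w \<le> 1/2" "t * norm (X *v w) \<le> 1/2"
    unfolding t_def using D1 by (simp_all add: field_simps)
  have "norm (t *\<^sub>R w) \<le> 1/2" "norm (X *v (t *\<^sub>R w)) \<le> 1/2"
    using t1 tpos by (simp_all add: matrix_vector_mult_scaleR)
  hence "norm (X *v (t *\<^sub>R w)) = norm (t *\<^sub>R w)"
    using h dL_small[OF l m] by metis
  hence "t * norm (X *v w) = t * norm w" using tpos by (simp add: matrix_vector_mult_scaleR)
  thus "norm (X *v w) = norm w" using tpos by simp
qed

lemma Sym_TG: "lat L \<Longrightarrow> minnorm L \<Longrightarrow>
   Sym (TG L) = {induced (TG L) \<phi> | \<phi>. \<phi> \<in> NL L \<and> normpres (snd \<phi>)}"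
proof -
  assume l: "lat L" and m: "minnorm L"
  show ?thesis unfolding set_eq_iff Sym_TG_iff[OF l]
    using dL_normpres dL_pres_normpres[OF l m] by blast
qed


(* Part 4 *)

definition lat2 :: "real^2 \<Rightarrow> real^2 \<Rightarrow> (real^2) set" where
  "lat2 u v = {of_int m *\<^sub>R u + of_int n *\<^sub>R v | m n. True}"

lemma lat_lat2: "lat (lat2 u v)"
  unfolding lat_def lat2_def
proof (intro conjI ballI)
  show "0 \<in> {of_int m *\<^sub>R u + of_int n *\<^sub>R v | m n. True}"
    by (rule CollectI, rule exI[of _ 0], rule exI[of _ 0]) simp
next
  fix x y assume "x \<in> {of_int m *\<^sub>R u + of_int n *\<^sub>R v | m n. True}"
     "y \<in> {of_int m *\<^sub>R u + of_int n *\<^sub>R v | m n. True}"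
  then obtain m n m' n' where "x = of_int m *\<^sub>R u + of_int n *\<^sub>R v" "y = of_int m' *\<^sub>R u + of_int n' *\<^sub>R v"
    by blast
  hence "x + y = of_int (m + m') *\<^sub>R u + of_int (n + n') *\<^sub>R v" by (simp add: algebra_simps)
  thus "x + y \<in> {of_int m *\<^sub>R u + of_int n *\<^sub>R v | m n. True}" by blast
next
  fix x assume "x \<in> {of_int m *\<^sub>R u + of_int n *\<^sub>R v | m n. True}"
  then obtain m n where "x = of_int m *\<^sub>R u + of_int n *\<^sub>R v" by blast
  hence "- x = of_int (- m) *\<^sub>R u + of_int (- n) *\<^sub>R v" by (simp add: algebra_simps)
  thus "- x \<in> {of_int m *\<^sub>R u + of_int n *\<^sub>R v | m n. True}" by blast
qed

lemma transl_comp: "aff_comp (transl a) (transl b) = transl (a + b)"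
  by (simp add: aff_comp_def transl_def)
lemma transl_inv: "inv\<^bsub>AffGroup\<^esub> (transl a) = transl (- a)"
  by (simp add: AffGroup_inv transl_def invertible_id aff_inv_def minv_id)
lemma transl_carrier: "transl a \<in> carrier AffGroup"
  by (simp add: AffGroup_def transl_def invertible_id)

lemma subgroup_TG: "lat L \<Longrightarrow> subgroup (TG L) AffGroup"
proof (rule group.subgroupI[OF AffGroup_group])
  assume l: "lat L"
  show "TG L \<subseteq> carrier AffGroup" unfolding TG_def using transl_carrier by blast
  show "TG L \<noteq> {}" unfolding TG_def using lat_0[OF l] by blast
  fix a assume "a \<in> TG L"
  then obtain x where "x \<in> L" "a = transl x" unfolding TG_def by blast
  thus "inv\<^bsub>AffGroup\<^esub> a \<in> TG L" unfolding TG_def using transl_inv lat_neg[OF l] by auto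
next
  assume l: "lat L"
  fix a b assume "a \<in> TG L" "b \<in> TG L"
  then obtain x y where "x \<in> L" "a = transl x" "y \<in> L" "b = transl y" unfolding TG_def by blast
  thus "a \<otimes>\<^bsub>AffGroup\<^esub> b \<in> TG L" unfolding TG_def
    using lat_add[OF l] by (auto simp: AffGroup_def transl_comp)
qed

lemma gen_transl_pow:
  assumes "u \<in> S"
  shows "transl (of_int k *\<^sub>R u) \<in> generate AffGroup (transl ` S)"
proof -
  let ?G = "generate AffGroup (transl ` S)"
  have sub: "subgroup ?G AffGroup"
    by (rule group.generate_is_subgroup[OF AffGroup_group]) (use transl_carrier in blast)
  have tu: "transl u \<in> ?G" using assms by (intro generate.incl) blast
  have tiu: "transl (- u) \<in> ?G" using generate.inv[of "transl u" "transl ` S" AffGroup] assms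
    by (simp add: transl_inv)
  show ?thesis
  proof (induction k rule: int_induct[where k = 0])
    case base
    have "\<one>\<^bsub>AffGroup\<^esub> \<in> ?G" by (rule generate.one)
    thus ?case by (simp add: AffGroup_def transl_def)
  next
    case (step1 i)
    have "transl (of_int (i + 1) *\<^sub>R u) = transl (of_int i *\<^sub>R u) \<otimes>\<^bsub>AffGroup\<^esub> transl u"
      by (simp add: AffGroup_def transl_comp algebra_simps)
    thus ?case using subgroup.m_closed[OF sub step1(2) tu] by simp
  next
    case (step2 i)
    have "transl (of_int (i - 1) *\<^sub>R u) = transl (of_int i *\<^sub>R u) \<otimes>\<^bsub>AffGroup\<^esub> transl (- u)"
      by (simp add: AffGroup_def transl_comp algebra_simps)
    thus ?case using subgroup.m_closed[OF sub step2(2) tiu] by simp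
  qed
qed

lemma generate_lat2: "generate AffGroup {transl u, transl v} = TG (lat2 u v)"
proof
  show "generate AffGroup {transl u, transl v} \<subseteq> TG (lat2 u v)"
  proof (rule group.generate_subgroup_incl[OF AffGroup_group])
    show "{transl u, transl v} \<subseteq> TG (lat2 u v)" unfolding TG_def lat2_def
    proof -
      have "u = of_int 1 *\<^sub>R u + of_int 0 *\<^sub>R v" "v = of_int 0 *\<^sub>R u + of_int 1 *\<^sub>R v" by simp_all
      thus "{transl u, transl v} \<subseteq> transl ` {of_int m *\<^sub>R u + of_int n *\<^sub>R v | m n. True}" by blast
    qed
    show "subgroup (TG (lat2 u v)) AffGroup" by (rule subgroup_TG[OF lat_lat2])
  qed
next
  show "TG (lat2 u v) \<subseteq> generate AffGroup {transl u, transl v}"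
  proof
    fix g assume "g \<in> TG (lat2 u v)"
    then obtain m n where g: "g = transl (of_int m *\<^sub>R u + of_int n *\<^sub>R v)"
      unfolding TG_def lat2_def by blast
    have e: "{transl u, transl v} = transl ` {u, v}" by simp
    have "transl (of_int m *\<^sub>R u) \<in> generate AffGroup {transl u, transl v}"
      unfolding e by (rule gen_transl_pow) simp
    moreover have "transl (of_int n *\<^sub>R v) \<in> generate AffGroup {transl u, transl v}"
      unfolding e by (rule gen_transl_pow) simp
    ultimately have "transl (of_int m *\<^sub>R u) \<otimes>\<^bsub>AffGroup\<^esub> transl (of_int n *\<^sub>R v) \<in> generate AffGroup {transl u, transl v}"
      by (rule generate.eng)
    thus "g \<in> generate AffGroup {transl u, transl v}" unfolding g by (simp add: AffGroup_def transl_comp)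
  qed
qed

definition LM :: "(real^2) set" where "LM = lat2 e1 e2"
definition v2 :: "real^2" where "v2 = (1/2) *\<^sub>R e1 + (sqrt 3 / 2) *\<^sub>R e2"
definition LL :: "(real^2) set" where "LL = lat2 e1 v2"

lemma Mgrp_TG: "Mgrp = TG LM" by (simp add: Mgrp_def LM_def generate_lat2)
lemma Lgrp_TG: "Lgrp = TG LL" by (simp add: Lgrp_def LL_def v2_def generate_lat2)
lemma lat_LM: "lat LM" by (simp add: LM_def lat_lat2)
lemma lat_LL: "lat LL" by (simp add: LL_def lat_lat2)

lemma e1_c [simp]: "e1 $ 1 = 1" "e1 $ 2 = 0" by (simp_all add: e1_def)
lemma e2_c [simp]: "e2 $ 1 = 0" "e2 $ 2 = 1" by (simp_all add: e2_def)
lemma v2_c [simp]: "v2 $ 1 = 1/2" "v2 $ 2 = sqrt 3 / 2" by (simp_all add: v2_def)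

lemma vec2_eq: "(x::real^2) = y \<longleftrightarrow> x $ 1 = y $ 1 \<and> x $ 2 = y $ 2"
  by (simp add: vec_eq_iff forall_2)

lemma LM_char: "LM = {x::real^2. x $ 1 \<in> \<int> \<and> x $ 2 \<in> \<int>}"
proof (intro equalityI subsetI)
  fix x assume "x \<in> LM"
  then obtain m n where "x = of_int m *\<^sub>R e1 + of_int n *\<^sub>R e2" unfolding LM_def lat2_def by blast
  thus "x \<in> {x. x $ 1 \<in> \<int> \<and> x $ 2 \<in> \<int>}" by simp
next
  fix x :: "real^2" assume "x \<in> {x. x $ 1 \<in> \<int> \<and> x $ 2 \<in> \<int>}"
  then obtain m n where mn: "x $ 1 = of_int m" "x $ 2 = of_int n" by (auto elim!: Ints_cases)
  hence "x = of_int m *\<^sub>R e1 + of_int n *\<^sub>R e2" by (simp add: vec2_eq)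
  thus "x \<in> LM" unfolding LM_def lat2_def by blast
qed

lemma norm2: "norm (x::real^2) = sqrt (x$1^2 + x$2^2)"
  by (simp add: norm_vec_def L2_set_def UNIV_2)

lemma sqrt_ge1: "1 \<le> s \<Longrightarrow> 1 \<le> sqrt s" by simp

lemma minnorm_LM: "minnorm LM"
  unfolding minnorm_def
proof (intro ballI impI)
  fix l assume "l \<in> LM" "l \<noteq> 0"
  then obtain m n where mn: "l $ 1 = of_int m" "l $ 2 = of_int n" unfolding LM_char by (auto elim!: Ints_cases)
  have "m \<noteq> 0 \<or> n \<noteq> 0" using \<open>l \<noteq> 0\<close> mn by (auto simp: vec2_eq)
  hence "1 \<le> m^2 + n^2" by (metis add_increasing add_increasing2 int_one_le_iff_zero_less zero_le_power2 zero_less_power2)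
  hence "real_of_int 1 \<le> real_of_int (m^2 + n^2)" by (simp only: of_int_le_iff)
  hence "(1::real) \<le> (of_int m)^2 + (of_int n)^2" by simp
  thus "1 \<le> norm l" unfolding norm2 mn by simp
qed

lemma int_hex: "(m::int) \<noteq> 0 \<or> n \<noteq> 0 \<Longrightarrow> 1 \<le> m^2 + m*n + n^2"
proof -
  assume h: "m \<noteq> 0 \<or> n \<noteq> 0"
  have e: "4 * (m^2 + m*n + n^2) = (2*m+n)^2 + 3*n^2" by (simp add: power2_eq_square algebra_simps)
  have "0 < (2*m+n)^2 + 3*n^2"
  proof (cases "n = 0")
    case True thus ?thesis using h by simp
  next
    case False thus ?thesis by (simp add: add_nonneg_pos)
  qed
  hence "0 < 4 * (m^2 + m*n + n^2)" unfolding e .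
  hence "0 < m^2 + m*n + n^2" by simp
  thus ?thesis by linarith
qed

lemma LL_elem: "of_int m *\<^sub>R e1 + of_int n *\<^sub>R v2 = (vector [of_int m + of_int n / 2, of_int n * sqrt 3 / 2] :: real^2)"
  by (simp add: vec2_eq)

lemma minnorm_LL: "minnorm LL"
  unfolding minnorm_def
proof (intro ballI impI)
  fix l assume "l \<in> LL" "l \<noteq> 0"
  then obtain m n where l: "l = of_int m *\<^sub>R e1 + of_int n *\<^sub>R v2" unfolding LL_def lat2_def by blast
  have "m \<noteq> 0 \<or> n \<noteq> 0" using \<open>l \<noteq> 0\<close> l by auto
  hence "1 \<le> m^2 + m*n + n^2" by (rule int_hex)
  hence "real_of_int 1 \<le> real_of_int (m^2 + m*n + n^2)" by (simp only: of_int_le_iff)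
  hence "(1::real) \<le> (of_int m)^2 + (of_int m) * (of_int n) + (of_int n)^2" by simp
  moreover have "(of_int m + of_int n / 2)^2 + (of_int n * sqrt 3 / 2)^2
     = (of_int m)^2 + (of_int m) * (of_int n) + ((of_int n)^2 :: real)"
    by (simp add: power2_eq_square algebra_simps)
  ultimately show "1 \<le> norm l" unfolding norm2 l by simp
qed


(* Part 5 *)

lemma mv2: "(X::real^2^2) *v v = vector [X$1$1 * v$1 + X$1$2 * v$2, X$2$1 * v$1 + X$2$2 * v$2]"
  by (simp add: vec2_eq matrix_vector_mult_def sum_2)

lemma mat2_eq: "(X::real^2^2) = Y \<longleftrightarrow> X$1$1 = Y$1$1 \<and> X$1$2 = Y$1$2 \<and> X$2$1 = Y$2$1 \<and> X$2$2 = Y$2$2"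
  by (simp add: vec_eq_iff forall_2)

lemma mat2_mult: "(vector [vector [a,b], vector [c,d]] :: real^2^2) ** (vector [vector [a',b'], vector [c',d']] :: real^2^2)
  = vector [vector [a*a' + b*c', a*b' + b*d'], vector [c*a' + d*c', c*b' + d*d']]"
  unfolding mat2_eq by (simp add: matrix_matrix_mult_def sum_2)

lemma mat1_2: "(mat 1 :: real^2^2) = vector [vector [1,0], vector [0,1]]"
  unfolding mat2_eq by (simp add: mat_def)

definition Dinv :: "real^2^2" where "Dinv = vector [vector [1, 1 / sqrt 3], vector [0, 2 / sqrt 3]]"

lemma sqrt3: "sqrt 3 * sqrt 3 = (3::real)" by simp
lemma sqrt3_nz: "sqrt 3 \<noteq> (0::real)" by simp

lemma D_Dinv: "Dmat ** Dinv = mat 1"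
  unfolding Dmat_def Dinv_def mat2_mult mat1_2 using sqrt3_nz by (simp add: field_simps)
lemma Dinv_D: "Dinv ** Dmat = mat 1"
  unfolding Dmat_def Dinv_def mat2_mult mat1_2 using sqrt3_nz by (simp add: field_simps)
lemma inv_D: "invertible Dmat" unfolding invertible_def using D_Dinv Dinv_D by blast
lemma minv_D: "matrix_inv Dmat = Dinv" by (rule minv_unique[OF D_Dinv Dinv_D])

lemma Dmat_apply: "Dmat *v x = vector [x$1 - x$2 / 2, sqrt 3 / 2 * x$2]"
  by (simp add: mv2 Dmat_def)

lemma D_LM: "((*v) Dmat) ` LM = LL"
proof (intro equalityI subsetI)
  fix y assume "y \<in> ((*v) Dmat) ` LM"
  then obtain m n where y: "y = Dmat *v (of_int m *\<^sub>R e1 + of_int n *\<^sub>R e2)"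
    unfolding LM_def lat2_def by blast
  have "y = of_int (m - n) *\<^sub>R e1 + of_int n *\<^sub>R v2" unfolding y Dmat_apply
    by (simp add: vec2_eq algebra_simps)
  thus "y \<in> LL" unfolding LL_def lat2_def by blast
next
  fix y assume "y \<in> LL"
  then obtain m n where y: "y = of_int m *\<^sub>R e1 + of_int n *\<^sub>R v2"
    unfolding LL_def lat2_def by blast
  have "y = Dmat *v (of_int (m + n) *\<^sub>R e1 + of_int n *\<^sub>R e2)" unfolding y Dmat_apply
    by (simp add: vec2_eq algebra_simps)
  moreover have "of_int (m + n) *\<^sub>R e1 + of_int n *\<^sub>R e2 \<in> LM" unfolding LM_def lat2_def by blast
  ultimately show "y \<in> ((*v) Dmat) ` LM" by blast
qed

lemma Dinv_LL: "((*v) (matrix_inv Dmat)) ` LL = LM"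
  unfolding D_LM[symmetric] image_image minv_apply_l[OF inv_D] by simp

abbreviation cj :: "real^2^2 \<Rightarrow> affmap \<Rightarrow> affmap" where
  "cj P \<phi> \<equiv> aff_comp (aff_comp (linmap P) \<phi>) (aff_inv (linmap P))"

lemma cj_eq: "cj P \<phi> = (P *v fst \<phi>, P ** snd \<phi> ** matrix_inv P)"
  by (simp add: aff_comp_def aff_inv_def linmap_def)

lemma cj_apply: "invertible P \<Longrightarrow> aff_apply (cj P \<phi>) (P *v x) = P *v aff_apply \<phi> x"
  unfolding cj_eq by (simp add: aff_apply_def matrix_vector_mul_assoc[symmetric] minv_apply_l matrix_vector_right_distrib)

lemma cj_comp: "invertible P \<Longrightarrow> cj P (aff_comp \<phi> \<psi>) = aff_comp (cj P \<phi>) (cj P \<psi>)"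
proof -
  assume i: "invertible P"
  have "P ** snd \<phi> ** matrix_inv P ** (P ** snd \<psi> ** matrix_inv P) = P ** snd \<phi> ** (matrix_inv P ** P) ** snd \<psi> ** matrix_inv P"
    by (simp add: matrix_mul_assoc)
  also have "\<dots> = P ** (snd \<phi> ** snd \<psi>) ** matrix_inv P" by (simp add: minv_l[OF i] matrix_mul_assoc)
  finally have m: "P ** snd \<phi> ** matrix_inv P ** (P ** snd \<psi> ** matrix_inv P) = P ** (snd \<phi> ** snd \<psi>) ** matrix_inv P" .
  have v: "P *v fst \<phi> + (P ** snd \<phi> ** matrix_inv P) *v (P *v fst \<psi>) = P *v (fst \<phi> + snd \<phi> *v fst \<psi>)"
    by (simp add: matrix_vector_mul_assoc[symmetric] minv_apply_l[OF i] matrix_vector_right_distrib)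
  show ?thesis unfolding cj_eq by (simp only: aff_comp_def fst_conv snd_conv v m)
qed

lemma cj_cj: "invertible P \<Longrightarrow> cj (matrix_inv P) (cj P \<phi>) = \<phi>"
proof -
  assume i: "invertible P"
  have "matrix_inv P ** (P ** snd \<phi> ** matrix_inv P) ** matrix_inv (matrix_inv P) = (matrix_inv P ** P) ** snd \<phi> ** (matrix_inv P ** P)"
    by (simp add: matrix_mul_assoc minv_minv[OF i])
  thus ?thesis unfolding cj_eq fst_conv snd_conv by (simp add: minv_l[OF i] minv_apply_l[OF i])
qed

lemma cj_cj': "invertible P \<Longrightarrow> cj P (cj (matrix_inv P) \<phi>) = \<phi>"
  using cj_cj[OF minv_inv, of P \<phi>] minv_minv[of P] by simp

lemma cj_NL: "invertible P \<Longrightarrow> \<phi> \<in> NL L \<Longrightarrow> cj P \<phi> \<in> NL (((*v) P) ` L)"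
proof -
  assume i: "invertible P" and p: "\<phi> \<in> NL L"
  hence pi: "invertible (snd \<phi>)" and pe: "((*v) (snd \<phi>)) ` L = L" by (auto simp: NL_def)
  have "invertible (P ** snd \<phi> ** matrix_inv P)" using i pi minv_inv[OF i] by (simp add: invertible_mult)
  moreover have "((*v) (P ** snd \<phi> ** matrix_inv P)) ` ((*v) P ` L) = ((*v) P) ` ((*v) (snd \<phi>) ` L)"
    by (simp add: image_image matrix_vector_mul_assoc[symmetric] minv_apply_l[OF i])
  ultimately show ?thesis using pe unfolding cj_eq by (simp add: NL_def)
qed

lemma cjD_NL: "\<phi> \<in> NL LM \<Longrightarrow> cj Dmat \<phi> \<in> NL LL"
  using cj_NL[OF inv_D] D_LM by metis
lemma cjDinv_NL: "\<psi> \<in> NL LL \<Longrightarrow> cj (matrix_inv Dmat) \<psi> \<in> NL LM"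
  using cj_NL[OF minv_inv[OF inv_D]] Dinv_LL by metis

lemma cjD_diff: "\<phi> \<in> NL LM \<Longrightarrow> \<psi> \<in> NL LM \<Longrightarrow>
   (\<forall>y. aff_apply (cj Dmat \<phi>) y - aff_apply (cj Dmat \<psi>) y \<in> LL) \<longleftrightarrow> (\<forall>x. aff_apply \<phi> x - aff_apply \<psi> x \<in> LM)"
proof -
  have key: "aff_apply (cj Dmat \<phi>) (Dmat *v x) - aff_apply (cj Dmat \<psi>) (Dmat *v x) \<in> LL
     \<longleftrightarrow> aff_apply \<phi> x - aff_apply \<psi> x \<in> LM" for x
  proof -
    have "aff_apply (cj Dmat \<phi>) (Dmat *v x) - aff_apply (cj Dmat \<psi>) (Dmat *v x) = Dmat *v (aff_apply \<phi> x - aff_apply \<psi> x)"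
      by (simp add: cj_apply[OF inv_D] matrix_vector_mult_diff_distrib)
    moreover have "Dmat *v z \<in> LL \<longleftrightarrow> z \<in> LM" for z
      unfolding D_LM[symmetric] using inj_matrix_vector_mult[OF inv_D] by (auto simp: inj_def)
    ultimately show ?thesis by simp
  qed
  have surj: "\<forall>y. \<exists>x. y = Dmat *v x" using minv_apply_r[OF inv_D] by metis
  show ?thesis using key surj by metis
qed

lemma sharp_formula: "\<phi> \<in> NL LM \<Longrightarrow>
   sharp (linmap Dmat) Mgrp Lgrp (induced Mgrp \<phi>) = induced Lgrp (cj Dmat \<phi>)"
proof -
  assume p: "\<phi> \<in> NL LM"
  define \<psi> where "\<psi> = (SOME \<psi>. \<psi> \<in> aff_normalizer Mgrp \<and> induced Mgrp \<psi> = induced Mgrp \<phi>)"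
  have "\<psi> \<in> aff_normalizer Mgrp \<and> induced Mgrp \<psi> = induced Mgrp \<phi>"
    unfolding \<psi>_def by (rule someI[of _ \<phi>]) (simp add: Mgrp_TG normalizer_TG p)
  hence q: "\<psi> \<in> NL LM" and e: "induced (TG LM) \<psi> = induced (TG LM) \<phi>"
    by (simp_all add: Mgrp_TG normalizer_TG)
  have "\<forall>x. aff_apply \<psi> x - aff_apply \<phi> x \<in> LM" using e induced_eq_iff[OF lat_LM q p] by blast
  hence "\<forall>y. aff_apply (cj Dmat \<psi>) y - aff_apply (cj Dmat \<phi>) y \<in> LL" using cjD_diff[OF q p] by blast
  hence "induced (TG LL) (cj Dmat \<psi>) = induced (TG LL) (cj Dmat \<phi>)"
    using induced_eq_iff[OF lat_LL cjD_NL[OF q] cjD_NL[OF p]] by blast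
  thus ?thesis unfolding sharp_def \<psi>_def[symmetric] by (simp add: Lgrp_TG)
qed

lemma sharp_iso: "sharp (linmap Dmat) Mgrp Lgrp \<in> iso (AffOrb Mgrp) (AffOrb Lgrp)"
proof -
  let ?s = "sharp (linmap Dmat) Mgrp Lgrp"
  have hom: "?s \<in> hom (AffOrb Mgrp) (AffOrb Lgrp)"
  proof (rule homI)
    fix x assume "x \<in> carrier (AffOrb Mgrp)"
    then obtain \<phi> where p: "\<phi> \<in> NL LM" "x = induced Mgrp \<phi>" unfolding Mgrp_TG AffOrb_carrier by blast
    show "?s x \<in> carrier (AffOrb Lgrp)" unfolding p(2) sharp_formula[OF p(1)]
      unfolding Lgrp_TG AffOrb_carrier using cjD_NL[OF p(1)] by blast
  next
    fix x y assume "x \<in> carrier (AffOrb Mgrp)" "y \<in> carrier (AffOrb Mgrp)"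
    then obtain \<phi> \<psi> where p: "\<phi> \<in> NL LM" "x = induced Mgrp \<phi>" "\<psi> \<in> NL LM" "y = induced Mgrp \<psi>"
      unfolding Mgrp_TG AffOrb_carrier by blast
    have "x \<otimes>\<^bsub>AffOrb Mgrp\<^esub> y = induced Mgrp (aff_comp \<phi> \<psi>)"
      unfolding p(2,4) Mgrp_TG using AffOrb_mult[OF lat_LM p(1,3)] .
    hence "?s (x \<otimes>\<^bsub>AffOrb Mgrp\<^esub> y) = induced Lgrp (aff_comp (cj Dmat \<phi>) (cj Dmat \<psi>))"
      using sharp_formula[OF NL_comp[OF p(1,3)]] cj_comp[OF inv_D] by simp
    also have "\<dots> = induced Lgrp (cj Dmat \<phi>) \<otimes>\<^bsub>AffOrb Lgrp\<^esub> induced Lgrp (cj Dmat \<psi>)"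
      unfolding Lgrp_TG using AffOrb_mult[OF lat_LL cjD_NL[OF p(1)] cjD_NL[OF p(3)]] by simp
    also have "\<dots> = ?s x \<otimes>\<^bsub>AffOrb Lgrp\<^esub> ?s y" unfolding p(2,4) sharp_formula[OF p(1)] sharp_formula[OF p(3)] ..
    finally show "?s (x \<otimes>\<^bsub>AffOrb Mgrp\<^esub> y) = ?s x \<otimes>\<^bsub>AffOrb Lgrp\<^esub> ?s y" .
  qed
  have inj: "inj_on ?s (carrier (AffOrb Mgrp))"
  proof (rule inj_onI)
    fix x y assume "x \<in> carrier (AffOrb Mgrp)" "y \<in> carrier (AffOrb Mgrp)" and e: "?s x = ?s y"
    then obtain \<phi> \<psi> where p: "\<phi> \<in> NL LM" "x = induced Mgrp \<phi>" "\<psi> \<in> NL LM" "y = induced Mgrp \<psi>"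
      unfolding Mgrp_TG AffOrb_carrier by blast
    have "induced Lgrp (cj Dmat \<phi>) = induced Lgrp (cj Dmat \<psi>)"
      using e unfolding p(2,4) sharp_formula[OF p(1)] sharp_formula[OF p(3)] .
    hence "induced (TG LL) (cj Dmat \<phi>) = induced (TG LL) (cj Dmat \<psi>)" unfolding Lgrp_TG .
    hence "\<forall>y. aff_apply (cj Dmat \<phi>) y - aff_apply (cj Dmat \<psi>) y \<in> LL"
      using induced_eq_iff[OF lat_LL cjD_NL[OF p(1)] cjD_NL[OF p(3)]] by blast
    hence "\<forall>x. aff_apply \<phi> x - aff_apply \<psi> x \<in> LM" using cjD_diff[OF p(1,3)] by blast
    thus "x = y" unfolding p(2,4) Mgrp_TG using induced_eq_iff[OF lat_LM p(1,3)] by blast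
  qed
  have img: "?s ` carrier (AffOrb Mgrp) = carrier (AffOrb Lgrp)"
  proof (intro equalityI subsetI)
    fix z assume "z \<in> ?s ` carrier (AffOrb Mgrp)"
    thus "z \<in> carrier (AffOrb Lgrp)" using hom by (auto simp: hom_def)
  next
    fix z assume "z \<in> carrier (AffOrb Lgrp)"
    then obtain \<psi> where q: "\<psi> \<in> NL LL" "z = induced Lgrp \<psi>" unfolding Lgrp_TG AffOrb_carrier by blast
    have p: "cj (matrix_inv Dmat) \<psi> \<in> NL LM" by (rule cjDinv_NL[OF q(1)])
    have "?s (induced Mgrp (cj (matrix_inv Dmat) \<psi>)) = z"
      unfolding sharp_formula[OF p] cj_cj'[OF inv_D] q(2) ..
    moreover have "induced Mgrp (cj (matrix_inv Dmat) \<psi>) \<in> carrier (AffOrb Mgrp)"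
      unfolding Mgrp_TG AffOrb_carrier using p by blast
    ultimately show "z \<in> ?s ` carrier (AffOrb Mgrp)" by blast
  qed
  show ?thesis unfolding iso_def using hom inj img by (simp add: bij_betw_def)
qed


(* Part 6 *)

lemma gen_char:
  fixes P :: "real^2^2 \<Rightarrow> bool" and X1 X2 :: "real^2^2"
  assumes P1: "P (mat 1)" and Pm: "\<And>X Y. P X \<Longrightarrow> P Y \<Longrightarrow> P (X ** Y)"
    and Pi: "\<And>X. invertible X \<Longrightarrow> P X \<Longrightarrow> P (matrix_inv X)"
    and N1: "linmap X1 \<in> NL LM" and N2: "linmap X2 \<in> NL LM" and PX1: "P X1" and PX2: "P X2"
    and cover: "\<And>X. linmap X \<in> NL LM \<Longrightarrow> P X \<Longrightarrow> induced Mgrp (linmap X) \<in>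
        generate (AffOrb Mgrp) (Kgrp \<union> {induced Mgrp (linmap X1), induced Mgrp (linmap X2)})"
  shows "generate (AffOrb Mgrp) (Kgrp \<union> {induced Mgrp (linmap X1), induced Mgrp (linmap X2)})
     = {induced Mgrp \<phi> | \<phi>. \<phi> \<in> NL LM \<and> P (snd \<phi>)}"
proof
  let ?H = "Kgrp \<union> {induced Mgrp (linmap X1), induced Mgrp (linmap X2)}"
  let ?S = "{induced Mgrp \<phi> | \<phi>. \<phi> \<in> NL LM \<and> P (snd \<phi>)}"
  have invS: "inv\<^bsub>AffOrb Mgrp\<^esub> (induced Mgrp \<phi>) \<in> ?S" if "\<phi> \<in> NL LM" "P (snd \<phi>)" for \<phi>
  proof -
    have "inv\<^bsub>AffOrb Mgrp\<^esub> (induced Mgrp \<phi>) = induced Mgrp (aff_inv \<phi>)"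
      unfolding Mgrp_TG using AffOrb_inv[OF lat_LM that(1)] .
    moreover have "aff_inv \<phi> \<in> NL LM" using NL_inv[OF that(1)] .
    moreover have "P (snd (aff_inv \<phi>))" using that Pi by (simp add: aff_inv_snd NL_def)
    ultimately show ?thesis by blast
  qed
  have HS: "h \<in> ?S \<and> inv\<^bsub>AffOrb Mgrp\<^esub> h \<in> ?S" if hH: "h \<in> ?H" for h
  proof -
    obtain \<phi> where "\<phi> \<in> NL LM" "P (snd \<phi>)" "h = induced Mgrp \<phi>"
    proof -
      consider "h \<in> Kgrp" | "h = induced Mgrp (linmap X1)" | "h = induced Mgrp (linmap X2)"
        using hH by blast
      then show ?thesis
      proof cases
        case 1 then obtain a where "h = induced Mgrp (transl a)" unfolding Kgrp_def by blast
        thus ?thesis using that[of "transl a"] NL_transl[of a LM] P1 by (simp add: transl_def)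
      next
        case 2 thus ?thesis using that[of "linmap X1"] N1 PX1 by (simp add: linmap_def)
      next
        case 3 thus ?thesis using that[of "linmap X2"] N2 PX2 by (simp add: linmap_def)
      qed
    qed
    thus ?thesis using invS by blast
  qed
  have oneS: "\<one>\<^bsub>AffOrb Mgrp\<^esub> \<in> ?S"
  proof -
    have "\<one>\<^bsub>AffOrb Mgrp\<^esub> = induced Mgrp (0, mat 1)" unfolding Mgrp_TG using AffOrb_one[OF lat_LM] .
    thus ?thesis using NL_one P1 by fastforce
  qed
  have multS: "a \<otimes>\<^bsub>AffOrb Mgrp\<^esub> b \<in> ?S" if aS: "a \<in> ?S" and bS: "b \<in> ?S" for a b
  proof -
    obtain \<phi> \<psi> where p: "\<phi> \<in> NL LM" "P (snd \<phi>)" "a = induced Mgrp \<phi>"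
      "\<psi> \<in> NL LM" "P (snd \<psi>)" "b = induced Mgrp \<psi>" using aS bS by blast
    have "a \<otimes>\<^bsub>AffOrb Mgrp\<^esub> b = induced Mgrp (aff_comp \<phi> \<psi>)"
      unfolding p(3,6) Mgrp_TG using AffOrb_mult[OF lat_LM p(1,4)] .
    moreover have "aff_comp \<phi> \<psi> \<in> NL LM" using NL_comp[OF p(1,4)] .
    moreover have "P (snd (aff_comp \<phi> \<psi>))" using Pm[OF p(2,5)] by (simp add: aff_comp_def)
    ultimately show ?thesis by blast
  qed
  show "generate (AffOrb Mgrp) ?H \<subseteq> ?S"
  proof
    fix h assume "h \<in> generate (AffOrb Mgrp) ?H"
    thus "h \<in> ?S"
    proof induction
      case one thus ?case by (rule oneS)
    next
      case (incl h) thus ?case using HS by blast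
    next
      case (inv h) thus ?case using HS by blast
    next
      case (eng h1 h2) thus ?case using multS by blast
    qed
  qed
next
  let ?H = "Kgrp \<union> {induced Mgrp (linmap X1), induced Mgrp (linmap X2)}"
  show "{induced Mgrp \<phi> | \<phi>. \<phi> \<in> NL LM \<and> P (snd \<phi>)} \<subseteq> generate (AffOrb Mgrp) ?H"
  proof
    fix f assume "f \<in> {induced Mgrp \<phi> | \<phi>. \<phi> \<in> NL LM \<and> P (snd \<phi>)}"
    then obtain \<phi> where p: "\<phi> \<in> NL LM" "P (snd \<phi>)" "f = induced Mgrp \<phi>" by blast
    have l: "linmap (snd \<phi>) \<in> NL LM" using p(1) by (simp add: NL_def linmap_def)
    have c: "aff_comp (transl (fst \<phi>)) (linmap (snd \<phi>)) = \<phi>"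
      by (simp add: aff_comp_def transl_def linmap_def)
    have "f = induced Mgrp (transl (fst \<phi>)) \<otimes>\<^bsub>AffOrb Mgrp\<^esub> induced Mgrp (linmap (snd \<phi>))"
      unfolding p(3) Mgrp_TG AffOrb_mult[OF lat_LM NL_transl l] c ..
    moreover have "induced Mgrp (transl (fst \<phi>)) \<in> generate (AffOrb Mgrp) ?H"
      by (rule generate.incl) (auto simp: Kgrp_def)
    moreover have "induced Mgrp (linmap (snd \<phi>)) \<in> generate (AffOrb Mgrp) ?H"
      using cover[OF l p(2)] .
    ultimately show "f \<in> generate (AffOrb Mgrp) ?H" using generate.eng by metis
  qed
qed

definition GLM :: "((real^2) set \<Rightarrow> (real^2) set) set \<Rightarrow> real^2^2 \<Rightarrow> bool" where
  "GLM H X \<longleftrightarrow> linmap X \<in> NL LM \<and> induced Mgrp (linmap X) \<in> generate (AffOrb Mgrp) H"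

lemma linmap_comp: "aff_comp (linmap X) (linmap Y) = linmap (X ** Y)"
  by (simp add: aff_comp_def linmap_def)

lemma GLM_mult: "GLM H X \<Longrightarrow> GLM H Y \<Longrightarrow> GLM H (X ** Y)"
proof -
  assume x: "GLM H X" and y: "GLM H Y"
  have n: "linmap X \<in> NL LM" "linmap Y \<in> NL LM" using x y by (simp_all add: GLM_def)
  have "induced Mgrp (linmap (X ** Y)) = induced Mgrp (linmap X) \<otimes>\<^bsub>AffOrb Mgrp\<^esub> induced Mgrp (linmap Y)"
    unfolding Mgrp_TG AffOrb_mult[OF lat_LM n] linmap_comp ..
  thus ?thesis using x y NL_comp[OF n] generate.eng unfolding GLM_def linmap_comp by metis
qed

lemma GLM_one: "GLM H (mat 1)"
proof -
  have "induced Mgrp (linmap (mat 1)) = \<one>\<^bsub>AffOrb Mgrp\<^esub>"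
    unfolding Mgrp_TG AffOrb_one[OF lat_LM] by (simp add: linmap_def)
  thus ?thesis unfolding GLM_def using generate.one NL_one by (metis linmap_def)
qed

lemma GLM_gen: "linmap X \<in> NL LM \<Longrightarrow> induced Mgrp (linmap X) \<in> H \<Longrightarrow> GLM H X"
  unfolding GLM_def using generate.incl by metis

lemma normsq: "(norm (x::real^2))^2 = x$1^2 + x$2^2"
  unfolding norm2 by simp

lemma selfinv_NL:
  assumes "X ** X = mat 1" "X$1$1 \<in> \<int>" "X$1$2 \<in> \<int>" "X$2$1 \<in> \<int>" "X$2$2 \<in> \<int>"
  shows "linmap X \<in> NL LM"
proof -
  have i: "invertible X" using assms(1) unfolding invertible_def by blast
  have sub: "X *v v \<in> LM" if "v \<in> LM" for v
    using that assms(2-5) unfolding LM_char mv2 by auto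
  have "((*v) X) ` LM = LM"
  proof (intro equalityI subsetI)
    fix y assume "y \<in> (*v) X ` LM" thus "y \<in> LM" using sub by blast
  next
    fix y assume y: "y \<in> LM"
    have "y = X *v (X *v y)" by (simp add: matrix_vector_mul_assoc assms(1))
    thus "y \<in> (*v) X ` LM" using sub[OF y] by blast
  qed
  thus ?thesis using i NL_linmap by blast
qed

lemma A_sq: "Amat ** Amat = mat 1" unfolding Amat_def mat2_mult mat1_2 by simp
lemma B_sq: "Bmat ** Bmat = mat 1" unfolding Bmat_def mat2_mult mat1_2 by simp
lemma C_sq: "Cmat ** Cmat = mat 1" unfolding Cmat_def mat2_mult mat1_2 by simp
lemma NL_A: "linmap Amat \<in> NL LM" by (rule selfinv_NL[OF A_sq]) (simp_all add: Amat_def)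
lemma NL_B: "linmap Bmat \<in> NL LM" by (rule selfinv_NL[OF B_sq]) (simp_all add: Bmat_def)
lemma NL_C: "linmap Cmat \<in> NL LM" by (rule selfinv_NL[OF C_sq]) (simp_all add: Cmat_def)

lemma int_sq_le1: "(x::int)^2 \<le> 1 \<Longrightarrow> x = -1 \<or> x = 0 \<or> x = 1"
proof -
  assume h: "x^2 \<le> 1"
  have "\<not> 2 \<le> \<bar>x\<bar>"
  proof
    assume a: "2 \<le> \<bar>x\<bar>"
    have "2 * 2 \<le> \<bar>x\<bar> * \<bar>x\<bar>" using mult_mono[OF a a] by simp
    thus False using h by (simp add: power2_eq_square abs_mult_self_eq)
  qed
  thus ?thesis by linarith
qed

lemma cls8:
  fixes a b c d :: int
  assumes "a^2 + c^2 = 1" "b^2 + d^2 = 1" "(a+b)^2 + (c+d)^2 = 2"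
  shows "(a,b,c,d) \<in> {(1,0,0,1), (-1,0,0,1), (0,1,1,0), (0,-1,1,0), (0,1,-1,0), (0,-1,-1,0), (1,0,0,-1), (-1,0,0,-1)}"
proof -
  have "a^2 \<le> 1" "c^2 \<le> 1" "b^2 \<le> 1" "d^2 \<le> 1" using assms(1,2) by (smt (verit) zero_le_power2)+
  hence "a = -1 \<or> a = 0 \<or> a = 1" "b = -1 \<or> b = 0 \<or> b = 1" "c = -1 \<or> c = 0 \<or> c = 1" "d = -1 \<or> d = 0 \<or> d = 1"
    using int_sq_le1 by blast+
  thus ?thesis using assms by (elim disjE) simp_all
qed

lemma Q_bound:
  fixes a c :: int
  assumes "a^2 - a*c + c^2 = 1"
  shows "a^2 \<le> 1" "c^2 \<le> 1"
proof -
  have e1: "4 * (a^2 - a*c + c^2) = (2*a - c)^2 + 3 * c^2" by (simp add: power2_eq_square algebra_simps)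
  have e2: "4 * (a^2 - a*c + c^2) = (2*c - a)^2 + 3 * a^2" by (simp add: power2_eq_square algebra_simps)
  have p: "0 \<le> (2*a - c)^2" "0 \<le> (2*c - a)^2" by simp_all
  have f1: "(2*a - c)^2 + 3*c^2 = 4" using e1 assms by simp
  have f2: "(2*c - a)^2 + 3*a^2 = 4" using e2 assms by simp
  have "3 * c^2 \<le> 4" using f1 p(1) by linarith
  moreover have "3 * a^2 \<le> 4" using f2 p(2) by linarith
  ultimately show "a^2 \<le> 1" "c^2 \<le> 1" by presburger+
qed

lemma cls12:
  fixes a b c d :: int
  assumes "a^2 - a*c + c^2 = 1" "b^2 - b*d + d^2 = 1" "(a+b)^2 - (a+b)*(c+d) + (c+d)^2 = 1"
  shows "(a,b,c,d) \<in> {(1,0,0,1), (-1,1,0,1), (0,1,1,0), (1,-1,1,0), (0,1,-1,1), (-1,0,-1,1),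
     (1,0,1,-1), (0,-1,1,-1), (-1,1,-1,0), (0,-1,-1,0), (1,-1,0,-1), (-1,0,0,-1)}"
proof -
  have "a^2 \<le> 1" "c^2 \<le> 1" "b^2 \<le> 1" "d^2 \<le> 1" using Q_bound assms(1,2) by blast+
  hence "a = -1 \<or> a = 0 \<or> a = 1" "b = -1 \<or> b = 0 \<or> b = 1" "c = -1 \<or> c = 0 \<or> c = 1" "d = -1 \<or> d = 0 \<or> d = 1"
    using int_sq_le1 by blast+
  thus ?thesis using assms by (elim disjE) simp_all
qed


(* Part 7 *)

lemma e1_LM: "e1 \<in> LM" by (simp add: LM_char)
lemma e2_LM: "e2 \<in> LM" by (simp add: LM_char)

lemma int_entries:
  assumes "linmap X \<in> NL LM"
  obtains a b c d :: int where "X$1$1 = of_int a" "X$1$2 = of_int b" "X$2$1 = of_int c" "X$2$2 = of_int d"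
proof -
  have e: "((*v) X) ` LM = LM" using assms by (simp add: NL_def linmap_def)
  have "X *v e1 \<in> LM" "X *v e2 \<in> LM" using e e1_LM e2_LM by blast+
  hence "X$1$1 \<in> \<int>" "X$2$1 \<in> \<int>" "X$1$2 \<in> \<int>" "X$2$2 \<in> \<int>" unfolding LM_char by (simp_all add: mv2)
  thus ?thesis using that by (metis Ints_cases)
qed

lemma normpres_one: "normpres (mat 1)" by (simp add: normpres_def)
lemma normpres_mult: "normpres X \<Longrightarrow> normpres Y \<Longrightarrow> normpres (X ** Y)"
  by (simp add: normpres_def matrix_vector_mul_assoc[symmetric])
lemma normpres_inv: "invertible X \<Longrightarrow> normpres X \<Longrightarrow> normpres (matrix_inv X)"
  unfolding normpres_def by (metis minv_apply_r)
lemma normpres_A: "normpres Amat" by (simp add: normpres_def norm2 mv2 Amat_def)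
lemma normpres_C: "normpres Cmat" by (simp add: normpres_def norm2 mv2 Cmat_def add.commute)

definition PL :: "real^2^2 \<Rightarrow> bool" where
  "PL X \<longleftrightarrow> (\<forall>v. norm (Dmat *v (X *v v)) = norm (Dmat *v v))"

lemma PL_one: "PL (mat 1)" by (simp add: PL_def)
lemma PL_mult: "PL X \<Longrightarrow> PL Y \<Longrightarrow> PL (X ** Y)"
  by (simp add: PL_def matrix_vector_mul_assoc[symmetric])
lemma PL_inv: "invertible X \<Longrightarrow> PL X \<Longrightarrow> PL (matrix_inv X)"
  unfolding PL_def by (metis minv_apply_r)

lemma sq34: "(sqrt 3 / 2 * x)^2 = 3/4 * (x::real)^2"
  by (simp add: power_mult_distrib power_divide)

lemma normD_sq: "(norm (Dmat *v v))^2 = v$1^2 - v$1 * v$2 + v$2^2"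
  unfolding normsq Dmat_apply vector_2 sq34 by (simp add: power2_eq_square field_simps)

lemma norm_eq_sq: "(norm (x::real^2))^2 = (norm y)^2 \<Longrightarrow> norm x = norm y"
  using power2_eq_iff_nonneg[of "norm x" "norm y"] by simp

lemma PL_B: "PL Bmat"
  unfolding PL_def
proof
  fix v
  have e: "Bmat *v v = vector [v$2 - v$1, v$2]" by (simp add: mv2 Bmat_def vec2_eq)
  show "norm (Dmat *v (Bmat *v v)) = norm (Dmat *v v)"
    by (rule norm_eq_sq) (unfold e normD_sq vector_2, simp add: power2_eq_square algebra_simps)
qed
lemma PL_C: "PL Cmat"
  unfolding PL_def
proof
  fix v
  have e: "Cmat *v v = vector [v$2, v$1]" by (simp add: mv2 Cmat_def vec2_eq)
  show "norm (Dmat *v (Cmat *v v)) = norm (Dmat *v v)"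
    by (rule norm_eq_sq) (unfold e normD_sq vector_2, simp add: power2_eq_square algebra_simps)
qed

abbreviation HA where "HA \<equiv> Kgrp \<union> {induced Mgrp (linmap Amat), induced Mgrp (linmap Cmat)}"
abbreviation HB where "HB \<equiv> Kgrp \<union> {induced Mgrp (linmap Bmat), induced Mgrp (linmap Cmat)}"

lemma real_int_eq: "real_of_int x = real_of_int y \<Longrightarrow> x = y" by simp

lemma cover_M_gen:
  assumes G1: "GLM H Amat" and G2: "GLM H Cmat"
  shows "linmap X \<in> NL LM \<Longrightarrow> normpres X \<Longrightarrow> GLM H X"
proof -
  assume n: "linmap X \<in> NL LM" and p: "normpres X"
  obtain a b c d :: int where abcd: "X$1$1 = of_int a" "X$1$2 = of_int b" "X$2$1 = of_int c" "X$2$2 = of_int d"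
    using int_entries[OF n] by blast
  have sq: "(norm (X *v v))^2 = (norm v)^2" for v using p by (simp add: normpres_def)
  have "real_of_int (a^2 + c^2) = real_of_int 1" using sq[of e1] by (simp add: normsq mv2 abcd)
  hence q1: "a^2 + c^2 = 1" by (rule real_int_eq)
  have "real_of_int (b^2 + d^2) = real_of_int 1" using sq[of e2] by (simp add: normsq mv2 abcd)
  hence q2: "b^2 + d^2 = 1" by (rule real_int_eq)
  have "real_of_int ((a+b)^2 + (c+d)^2) = real_of_int 2" using sq[of "e1 + e2"] by (simp add: normsq mv2 abcd)
  hence q3: "(a+b)^2 + (c+d)^2 = 2" by (rule real_int_eq)
  have cl: "(a,b,c,d) \<in> {(1,0,0,1), (-1,0,0,1), (0,1,1,0), (0,-1,1,0), (0,1,-1,0), (0,-1,-1,0), (1,0,0,-1), (-1,0,0,-1)}"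
    by (rule cls8[OF q1 q2 q3])
  have Xe: "X = vector [vector [of_int a, of_int b], vector [of_int c, of_int d]]"
    unfolding mat2_eq by (simp add: abcd)
  have W: "\<forall>W \<in> {mat 1, Amat, Cmat, Amat ** Cmat, Cmat ** Amat, Amat ** Cmat ** Amat, Cmat ** Amat ** Cmat,
      Amat ** Cmat ** Amat ** Cmat}. GLM H W"
    by (simp add: GLM_one G1 G2 GLM_mult)
  have "X \<in> {mat 1, Amat, Cmat, Amat ** Cmat, Cmat ** Amat, Amat ** Cmat ** Amat, Cmat ** Amat ** Cmat,
      Amat ** Cmat ** Amat ** Cmat}"
    using cl unfolding Xe by (auto simp: Amat_def Cmat_def mat2_mult mat1_2)
  thus ?thesis using W by blast
qed

lemma cover_L_gen:
  assumes G1: "GLM H Bmat" and G2: "GLM H Cmat"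
  shows "linmap X \<in> NL LM \<Longrightarrow> PL X \<Longrightarrow> GLM H X"
proof -
  assume n: "linmap X \<in> NL LM" and p: "PL X"
  obtain a b c d :: int where abcd: "X$1$1 = of_int a" "X$1$2 = of_int b" "X$2$1 = of_int c" "X$2$2 = of_int d"
    using int_entries[OF n] by blast
  have sq: "(norm (Dmat *v (X *v v)))^2 = (norm (Dmat *v v))^2" for v using p by (simp add: PL_def)
  have "real_of_int (a^2 - a*c + c^2) = real_of_int 1" using sq[of e1] unfolding normD_sq by (simp add: mv2 abcd)
  hence q1: "a^2 - a*c + c^2 = 1" by (rule real_int_eq)
  have "real_of_int (b^2 - b*d + d^2) = real_of_int 1" using sq[of e2] unfolding normD_sq by (simp add: mv2 abcd)
  hence q2: "b^2 - b*d + d^2 = 1" by (rule real_int_eq)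
  have "real_of_int ((a+b)^2 - (a+b)*(c+d) + (c+d)^2) = real_of_int 1" using sq[of "e1 + e2"] unfolding normD_sq by (simp add: mv2 abcd)
  hence q3: "(a+b)^2 - (a+b)*(c+d) + (c+d)^2 = 1" by (rule real_int_eq)
  have cl: "(a,b,c,d) \<in> {(1,0,0,1), (-1,1,0,1), (0,1,1,0), (1,-1,1,0), (0,1,-1,1), (-1,0,-1,1),
     (1,0,1,-1), (0,-1,1,-1), (-1,1,-1,0), (0,-1,-1,0), (1,-1,0,-1), (-1,0,0,-1)}"
    by (rule cls12[OF q1 q2 q3])
  have Xe: "X = vector [vector [of_int a, of_int b], vector [of_int c, of_int d]]"
    unfolding mat2_eq by (simp add: abcd)
  have W: "\<forall>W \<in> {mat 1, Bmat, Cmat, Bmat ** Cmat, Cmat ** Bmat, Bmat ** Cmat ** Bmat, Cmat ** Bmat ** Cmat,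
      Bmat ** Cmat ** Bmat ** Cmat, Cmat ** Bmat ** Cmat ** Bmat, Bmat ** Cmat ** Bmat ** Cmat ** Bmat,
      Cmat ** Bmat ** Cmat ** Bmat ** Cmat, Bmat ** Cmat ** Bmat ** Cmat ** Bmat ** Cmat}. GLM H W"
    by (simp add: GLM_one G1 G2 GLM_mult)
  have "X \<in> {mat 1, Bmat, Cmat, Bmat ** Cmat, Cmat ** Bmat, Bmat ** Cmat ** Bmat, Cmat ** Bmat ** Cmat,
      Bmat ** Cmat ** Bmat ** Cmat, Cmat ** Bmat ** Cmat ** Bmat, Bmat ** Cmat ** Bmat ** Cmat ** Bmat,
      Cmat ** Bmat ** Cmat ** Bmat ** Cmat, Bmat ** Cmat ** Bmat ** Cmat ** Bmat ** Cmat}"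
    using cl unfolding Xe by (auto simp: Bmat_def Cmat_def mat2_mult mat1_2)
  thus ?thesis using W by blast
qed

lemma cover_M: "linmap X \<in> NL LM \<Longrightarrow> normpres X \<Longrightarrow> GLM HA X"
proof -
  have G1: "GLM HA Amat" by (rule GLM_gen[OF NL_A]) simp
  have G2: "GLM HA Cmat" by (rule GLM_gen[OF NL_C]) simp
  show "linmap X \<in> NL LM \<Longrightarrow> normpres X \<Longrightarrow> GLM HA X" by (rule cover_M_gen[OF G1 G2])
qed

lemma cover_L: "linmap X \<in> NL LM \<Longrightarrow> PL X \<Longrightarrow> GLM HB X"
proof -
  have G1: "GLM HB Bmat" by (rule GLM_gen[OF NL_B]) simp
  have G2: "GLM HB Cmat" by (rule GLM_gen[OF NL_C]) simp
  show "linmap X \<in> NL LM \<Longrightarrow> PL X \<Longrightarrow> GLM HB X" by (rule cover_L_gen[OF G1 G2])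
qed

lemma genA: "generate (AffOrb Mgrp) HA = {induced Mgrp \<phi> | \<phi>. \<phi> \<in> NL LM \<and> normpres (snd \<phi>)}"
proof (rule gen_char[OF normpres_one normpres_mult normpres_inv NL_A NL_C normpres_A normpres_C])
  fix X assume a: "linmap X \<in> NL LM" "normpres X"
  have "GLM HA X" using a by (rule cover_M)
  thus "induced Mgrp (linmap X) \<in> generate (AffOrb Mgrp) HA" unfolding GLM_def by (rule conjunct2)
qed

lemma genB: "generate (AffOrb Mgrp) HB = {induced Mgrp \<phi> | \<phi>. \<phi> \<in> NL LM \<and> PL (snd \<phi>)}"
proof (rule gen_char[OF PL_one PL_mult PL_inv NL_B NL_C PL_B PL_C])
  fix X assume a: "linmap X \<in> NL LM" "PL X"
  have "GLM HB X" using a by (rule cover_L)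
  thus "induced Mgrp (linmap X) \<in> generate (AffOrb Mgrp) HB" unfolding GLM_def by (rule conjunct2)
qed

lemma SymL: "Sym Lgrp = sharp (linmap Dmat) Mgrp Lgrp ` generate (AffOrb Mgrp) HB"
proof -
  have S: "Sym Lgrp = {induced Lgrp \<psi> | \<psi>. \<psi> \<in> NL LL \<and> normpres (snd \<psi>)}"
    unfolding Lgrp_TG by (rule Sym_TG[OF lat_LL minnorm_LL])
  show ?thesis unfolding S genB
  proof (intro equalityI subsetI)
    fix f assume "f \<in> {induced Lgrp \<psi> | \<psi>. \<psi> \<in> NL LL \<and> normpres (snd \<psi>)}"
    then obtain \<psi> where q: "\<psi> \<in> NL LL" "normpres (snd \<psi>)" "f = induced Lgrp \<psi>" by blast
    let ?\<phi> = "cj (matrix_inv Dmat) \<psi>"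
    have p: "?\<phi> \<in> NL LM" by (rule cjDinv_NL[OF q(1)])
    have sn: "snd ?\<phi> = matrix_inv Dmat ** snd \<psi> ** Dmat"
      unfolding cj_eq by (simp add: minv_minv[OF inv_D])
    have "PL (snd ?\<phi>)" unfolding PL_def sn
    proof
      fix v
      have "Dmat *v ((matrix_inv Dmat ** snd \<psi> ** Dmat) *v v) = snd \<psi> *v (Dmat *v v)"
        by (simp add: matrix_vector_mul_assoc[symmetric] minv_apply_r[OF inv_D])
      thus "norm (Dmat *v ((matrix_inv Dmat ** snd \<psi> ** Dmat) *v v)) = norm (Dmat *v v)"
        using q(2) by (simp add: normpres_def)
    qed
    moreover have "f = sharp (linmap Dmat) Mgrp Lgrp (induced Mgrp ?\<phi>)"
      unfolding sharp_formula[OF p] cj_cj'[OF inv_D] q(3) ..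
    ultimately show "f \<in> sharp (linmap Dmat) Mgrp Lgrp ` {induced Mgrp \<phi> | \<phi>. \<phi> \<in> NL LM \<and> PL (snd \<phi>)}"
      using p by blast
  next
    fix f assume "f \<in> sharp (linmap Dmat) Mgrp Lgrp ` {induced Mgrp \<phi> | \<phi>. \<phi> \<in> NL LM \<and> PL (snd \<phi>)}"
    then obtain \<phi> where p: "\<phi> \<in> NL LM" "PL (snd \<phi>)" "f = sharp (linmap Dmat) Mgrp Lgrp (induced Mgrp \<phi>)"
      by blast
    have f: "f = induced Lgrp (cj Dmat \<phi>)" using p(3) sharp_formula[OF p(1)] by simp
    have "normpres (snd (cj Dmat \<phi>))" unfolding normpres_def cj_eq snd_conv
    proof
      fix w
      have "(Dmat ** snd \<phi> ** matrix_inv Dmat) *v w = Dmat *v (snd \<phi> *v (matrix_inv Dmat *v w))"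
        by (simp add: matrix_vector_mul_assoc[symmetric])
      also have "norm \<dots> = norm (Dmat *v (matrix_inv Dmat *v w))" using p(2) by (simp add: PL_def)
      also have "\<dots> = norm w" by (simp add: minv_apply_r[OF inv_D])
      finally show "norm ((Dmat ** snd \<phi> ** matrix_inv Dmat) *v w) = norm w" .
    qed
    thus "f \<in> {induced Lgrp \<psi> | \<psi>. \<psi> \<in> NL LL \<and> normpres (snd \<psi>)}"
      using f cjD_NL[OF p(1)] by blast
  qed
qed

theorem lemma30:
  shows "Sym Mgrp = generate (AffOrb Mgrp)
            (Kgrp \<union> {induced Mgrp (linmap Amat), induced Mgrp (linmap Cmat)})
       \<and> conj_set (linmap Dmat) Mgrp = Lgrp
       \<and> (\<forall>\<phi> \<in> aff_normalizer Mgrp.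
            sharp (linmap Dmat) Mgrp Lgrp (induced Mgrp \<phi>)
              = induced Lgrp (aff_comp (aff_comp (linmap Dmat) \<phi>) (aff_inv (linmap Dmat))))
       \<and> sharp (linmap Dmat) Mgrp Lgrp \<in> iso (AffOrb Mgrp) (AffOrb Lgrp)
       \<and> Sym Lgrp = sharp (linmap Dmat) Mgrp Lgrp `
            generate (AffOrb Mgrp)
              (Kgrp \<union> {induced Mgrp (linmap Bmat), induced Mgrp (linmap Cmat)})"
proof (intro conjI)
  have S: "Sym Mgrp = {induced Mgrp \<phi> | \<phi>. \<phi> \<in> NL LM \<and> normpres (snd \<phi>)}"
    unfolding Mgrp_TG by (rule Sym_TG[OF lat_LM minnorm_LM])
  show "Sym Mgrp = generate (AffOrb Mgrp) (Kgrp \<union> {induced Mgrp (linmap Amat), induced Mgrp (linmap Cmat)})"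
    unfolding S genA ..
  show "conj_set (linmap Dmat) Mgrp = Lgrp"
    unfolding Mgrp_TG Lgrp_TG using conj_TG[of "linmap Dmat" LM] inv_D D_LM by (simp add: linmap_def)
  have N: "aff_normalizer Mgrp = NL LM" by (simp add: Mgrp_TG normalizer_TG)
  show "\<forall>\<phi> \<in> aff_normalizer Mgrp.
            sharp (linmap Dmat) Mgrp Lgrp (induced Mgrp \<phi>)
              = induced Lgrp (aff_comp (aff_comp (linmap Dmat) \<phi>) (aff_inv (linmap Dmat)))"
    unfolding N using sharp_formula by blast
  show "sharp (linmap Dmat) Mgrp Lgrp \<in> iso (AffOrb Mgrp) (AffOrb Lgrp)" by (rule sharp_iso)
  show "Sym Lgrp = sharp (linmap Dmat) Mgrp Lgrp ` generate (AffOrb Mgrp)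
              (Kgrp \<union> {induced Mgrp (linmap Bmat), induced Mgrp (linmap Cmat)})" by (rule SymL)
qed


end
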